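(* Let $(X,Y,\phi)$ be an $L$-context and $Y'\subseteq Y$. The following are equivalent: (i) $Y\setminus Y'$ is $\phi$-reducible in RST, i.e. for every $\lambda\in L^Y$ there is $\lambda'\in L^{Y'}$ with $\phi^\forall\lambda=(\phi_{X,Y'})^\forall\lambda'$; (ii) $\phi^\forall\lambda=(\phi_{X,Y'})^\forall\big((\phi^\exists\phi^\forall\lambda)_{Y'}\big)$ for all $\lambda\in L^Y$; (iii) $\phi^\forall\phi^\exists=(\phi_{X,Y'})^\forall(\phi_{X,Y'})^\exists$ as maps $L^X\to L^X$; (iv) $\mathcal{K}\phi=\mathcal{K}\phi_{X,Y'}$ and the map $\mathcal{K}\phi\to\mathcal{K}\phi_{X,Y'}$, $\mu\mapsto(\phi_{X,Y'})^\forall(\phi_{X,Y'})^\exists\mu$, is the identity.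
   Context: $L=(L,* )$ is a complete residuated lattice: a complete lattice with bottom $0$ and top $1$, equipped with a commutative associative operation $*$ with unit $1$ satisfying $a*\bigvee_i b_i=\bigvee_i a*b_i$; $\to$ is its residuum ($a*b\le c\iff a\le b\to c$). An $L$-context is a triple $(X,Y,\phi)$ with $X,Y$ sets and $\phi\colon X\times Y\to L$. $L^X$ is the set of maps $X\to L$. $(\phi^\exists\mu)(y)=\bigvee_{x\in X}\mu(x)*\phi(x,y)$ for $\mu\in L^X$, $(\phi^\forall\lambda)(x)=\bigwedge_{y\in Y}(\phi(x,y)\to\lambda(y))$ for $\lambda\in L^Y$. $\mathcal{K}\phi=\{\mu\in L^X\mid\phi^\forall\phi^\exists\mu=\mu\}$. $\phi_{X,Y'}$ is the restriction of $\phi$ to $X\times Y'$; $\lambda_{Y'}$ the restriction of $\lambda\in L^Y$ to $Y'$. *)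

theory Defs
  imports Main "HOL-Library.FuncSet"
begin

definition complete_residuated_lattice ::
  "('l::complete_lattice \<Rightarrow> 'l \<Rightarrow> 'l) \<Rightarrow> ('l \<Rightarrow> 'l \<Rightarrow> 'l) \<Rightarrow> bool" where
  "complete_residuated_lattice tm res \<longleftrightarrow>
     (\<forall>a b c. tm (tm a b) c = tm a (tm b c)) \<and>
     (\<forall>a b. tm a b = tm b a) \<and>
     (\<forall>a. tm a top = a) \<and>
     (\<forall>a B. tm a (Sup B) = Sup (tm a ` B)) \<and>
     (\<forall>a b c. tm a b \<le> c \<longleftrightarrow> a \<le> res b c)"

(* Elements of L^X are represented as extensional functions in X ->E UNIV.
  The context phi is restricted to X \<times> Y by the sets passed as arguments. *)

definition ctx_exists ::
  "('l::complete_lattice \<Rightarrow> 'l \<Rightarrow> 'l) \<Rightarrow> ('x \<Rightarrow> 'y \<Rightarrow> 'l) \<Rightarrow> 'x set \<Rightarrow> 'y set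
   \<Rightarrow> ('x \<Rightarrow> 'l) \<Rightarrow> ('y \<Rightarrow> 'l)" where
  "ctx_exists tm phi X Y mu = restrict (\<lambda>y. SUP x\<in>X. tm (mu x) (phi x y)) Y"

definition ctx_forall ::
  "('l::complete_lattice \<Rightarrow> 'l \<Rightarrow> 'l) \<Rightarrow> ('x \<Rightarrow> 'y \<Rightarrow> 'l) \<Rightarrow> 'x set \<Rightarrow> 'y set
   \<Rightarrow> ('y \<Rightarrow> 'l) \<Rightarrow> ('x \<Rightarrow> 'l)" where
  "ctx_forall res phi X Y lam = restrict (\<lambda>x. INF y\<in>Y. res (phi x y) (lam y)) X"

definition ctx_K ::
  "('l::complete_lattice \<Rightarrow> 'l \<Rightarrow> 'l) \<Rightarrow> ('l \<Rightarrow> 'l \<Rightarrow> 'l) \<Rightarrow> ('x \<Rightarrow> 'y \<Rightarrow> 'l)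
   \<Rightarrow> 'x set \<Rightarrow> 'y set \<Rightarrow> ('x \<Rightarrow> 'l) set" where
  "ctx_K tm res phi X Y =
     {mu \<in> X \<rightarrow>\<^sub>E UNIV. ctx_forall res phi X Y (ctx_exists tm phi X Y mu) = mu}"

end

theory Submission
  imports Defs
begin

lemma crl_adj: "complete_residuated_lattice tm res \<Longrightarrow> tm a b \<le> c \<longleftrightarrow> a \<le> res b c"
  by (simp add: complete_residuated_lattice_def)

lemma crl_mono1:
  assumes L: "complete_residuated_lattice tm res" and "a \<le> a'"
  shows "tm a b \<le> tm a' b"
proof -
  have "a' \<le> res b (tm a' b)" using crl_adj[OF L] by blast
  then have "a \<le> res b (tm a' b)" using assms(2) by (rule order_trans[rotated])
  then show ?thesis using crl_adj[OF L] by blast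
qed

lemma res_mono2:
  assumes L: "complete_residuated_lattice tm res" and "c \<le> c'"
  shows "res b c \<le> res b c'"
proof -
  have "tm (res b c) b \<le> c" using crl_adj[OF L] by blast
  then have "tm (res b c) b \<le> c'" using assms(2) by simp
  then show ?thesis using crl_adj[OF L] by blast
qed

lemma ext_le:
  assumes L: "complete_residuated_lattice tm res" and x: "x \<in> X"
  shows "mu x \<le> ctx_forall res phi X Z (ctx_exists tm phi X Z mu) x"
  unfolding ctx_forall_def ctx_exists_def using x
proof (simp, intro INF_greatest)
  fix y assume "y \<in> Z"
  have "tm (mu x) (phi x y) \<le> (SUP x\<in>X. tm (mu x) (phi x y))"
    using x by (rule SUP_upper)
  then show "mu x \<le> res (phi x y) (SUP x\<in>X. tm (mu x) (phi x y))"
    using crl_adj[OF L] by blast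
qed

lemma forall_mono:
  assumes L: "complete_residuated_lattice tm res" and h: "\<forall>y\<in>Z. lam y \<le> lam' y"
  shows "ctx_forall res phi X Z lam \<le> ctx_forall res phi X Z lam'"
  unfolding ctx_forall_def le_fun_def
  using h by (auto intro!: INF_mono res_mono2[OF L] bexI)

lemma forall_cong:
  assumes h: "\<forall>y\<in>Z. lam y = lam' y"
  shows "ctx_forall res phi X Z lam = ctx_forall res phi X Z lam'"
  unfolding ctx_forall_def using h by (auto intro!: ext INF_cong)

lemma exists_mono:
  assumes L: "complete_residuated_lattice tm res" and h: "\<forall>x\<in>X. mu x \<le> nu x" and y: "y \<in> Z"
  shows "ctx_exists tm phi X Z mu y \<le> ctx_exists tm phi X Z nu y"
  unfolding ctx_exists_def using y
  using h by (auto intro!: SUP_mono crl_mono1[OF L] bexI)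

lemma ex_all_le:
  assumes L: "complete_residuated_lattice tm res" and y: "y \<in> Z"
  shows "ctx_exists tm phi X Z (ctx_forall res phi X Z lam) y \<le> lam y"
  unfolding ctx_exists_def using y
proof (simp, intro SUP_least)
  fix x assume x: "x \<in> X"
  have "ctx_forall res phi X Z lam x \<le> res (phi x y) (lam y)"
    unfolding ctx_forall_def using x y by (simp add: INF_lower2)
  then show "tm (ctx_forall res phi X Z lam x) (phi x y) \<le> lam y"
    using crl_adj[OF L] by blast
qed

lemma fef:
  assumes L: "complete_residuated_lattice tm res"
  shows "ctx_forall res phi X Z (ctx_exists tm phi X Z (ctx_forall res phi X Z lam))
         = ctx_forall res phi X Z lam"
proof (rule antisym)
  show "ctx_forall res phi X Z (ctx_exists tm phi X Z (ctx_forall res phi X Z lam))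
         \<le> ctx_forall res phi X Z lam"
    by (rule forall_mono[OF L]) (simp add: ex_all_le[OF L])
  show "ctx_forall res phi X Z lam \<le>
        ctx_forall res phi X Z (ctx_exists tm phi X Z (ctx_forall res phi X Z lam))"
  proof (rule le_funI)
    fix x show "ctx_forall res phi X Z lam x \<le>
        ctx_forall res phi X Z (ctx_exists tm phi X Z (ctx_forall res phi X Z lam)) x"
    proof (cases "x \<in> X")
      case True then show ?thesis by (rule ext_le[OF L])
    next
      case False then show ?thesis by (simp add: ctx_forall_def)
    qed
  qed
qed

lemma c_mono:
  assumes L: "complete_residuated_lattice tm res" and h: "\<forall>x\<in>X. mu x \<le> nu x"
  shows "ctx_forall res phi X Z (ctx_exists tm phi X Z mu) \<le> ctx_forall res phi X Z (ctx_exists tm phi X Z nu)"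
  by (rule forall_mono[OF L]) (simp add: exists_mono[OF L h])

lemma c_le:
  assumes sub: "Y' \<subseteq> Y"
  shows "ctx_forall res phi X Y (ctx_exists tm phi X Y mu) \<le> ctx_forall res phi X Y' (ctx_exists tm phi X Y' mu)"
proof -
  have "ctx_forall res phi X Y (ctx_exists tm phi X Y mu) \<le> ctx_forall res phi X Y' (ctx_exists tm phi X Y mu)"
    unfolding ctx_forall_def le_fun_def using sub by (auto intro!: INF_superset_mono)
  also have "\<dots> = ctx_forall res phi X Y' (ctx_exists tm phi X Y' mu)"
    by (rule forall_cong) (use sub in \<open>auto simp: ctx_exists_def\<close>)
  finally show ?thesis .
qed

lemma sandwich:
  assumes L: "complete_residuated_lattice tm res" and sub: "Y' \<subseteq> Y"
    and fix': "ctx_forall res phi X Y' (ctx_exists tm phi X Y' (ctx_forall res phi X Y (ctx_exists tm phi X Y mu)))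
               = ctx_forall res phi X Y (ctx_exists tm phi X Y mu)"
  shows "ctx_forall res phi X Y (ctx_exists tm phi X Y mu) = ctx_forall res phi X Y' (ctx_exists tm phi X Y' mu)"
proof (rule antisym)
  show "ctx_forall res phi X Y (ctx_exists tm phi X Y mu) \<le> ctx_forall res phi X Y' (ctx_exists tm phi X Y' mu)"
    using sub by (rule c_le)
  have "ctx_forall res phi X Y' (ctx_exists tm phi X Y' mu) \<le>
        ctx_forall res phi X Y' (ctx_exists tm phi X Y' (ctx_forall res phi X Y (ctx_exists tm phi X Y mu)))"
    by (rule c_mono[OF L]) (simp add: ext_le[OF L])
  then show "ctx_forall res phi X Y' (ctx_exists tm phi X Y' mu) \<le> ctx_forall res phi X Y (ctx_exists tm phi X Y mu)"
    using fix' by simp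
qed

theorem mainTheorem5:
  fixes tm res :: "'l::complete_lattice \<Rightarrow> 'l \<Rightarrow> 'l"
    and phi :: "'x \<Rightarrow> 'y \<Rightarrow> 'l"
    and X :: "'x set" and Y Y' :: "'y set"
  assumes L: "complete_residuated_lattice tm res"
    and sub: "Y' \<subseteq> Y"
  defines "i \<equiv> (\<forall>lam \<in> Y \<rightarrow>\<^sub>E UNIV. \<exists>lam' \<in> Y' \<rightarrow>\<^sub>E UNIV.
                   ctx_forall res phi X Y lam = ctx_forall res phi X Y' lam')"
    and "ii \<equiv> (\<forall>lam \<in> Y \<rightarrow>\<^sub>E UNIV.
                   ctx_forall res phi X Y lam =
                   ctx_forall res phi X Y'
                     (restrict (ctx_exists tm phi X Y (ctx_forall res phi X Y lam)) Y'))"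
    and "iii \<equiv> (\<forall>mu \<in> X \<rightarrow>\<^sub>E UNIV.
                   ctx_forall res phi X Y (ctx_exists tm phi X Y mu) =
                   ctx_forall res phi X Y' (ctx_exists tm phi X Y' mu))"
    and "iv \<equiv> (ctx_K tm res phi X Y = ctx_K tm res phi X Y' \<and>
                (\<forall>mu \<in> ctx_K tm res phi X Y.
                   ctx_forall res phi X Y' (ctx_exists tm phi X Y' mu) = mu))"
  shows "(i \<longleftrightarrow> ii) \<and> (i \<longleftrightarrow> iii) \<and> (i \<longleftrightarrow> iv)"
proof -
  let ?F = "ctx_forall res phi X" and ?E = "ctx_exists tm phi X"
  have R: "\<And>mu. restrict (?E Y mu) Y' = ?E Y' mu"
    unfolding ctx_exists_def using sub by (auto intro!: ext)
  have ii_eq: "ii \<longleftrightarrow> (\<forall>lam\<in>Y\<rightarrow>\<^sub>E UNIV. ?F Y lam = ?F Y' (?E Y' (?F Y lam)))"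
    by (simp add: ii_def R)
  have EPi: "\<And>Z mu. ?E Z mu \<in> Z \<rightarrow>\<^sub>E UNIV" by (simp add: ctx_exists_def)
  have FPi: "\<And>Z lam. ?F Z lam \<in> X \<rightarrow>\<^sub>E UNIV" by (simp add: ctx_forall_def)
  have i_ii: "i \<longleftrightarrow> ii"
  proof
    assume i: i
    show ii unfolding ii_eq
    proof
      fix lam :: "'y \<Rightarrow> 'l" assume "lam \<in> Y \<rightarrow>\<^sub>E UNIV"
      then obtain lam' where "?F Y lam = ?F Y' lam'" using i unfolding i_def by blast
      then show "?F Y lam = ?F Y' (?E Y' (?F Y lam))" using fef[OF L, of phi X Y' lam'] by simp
    qed
  next
    assume ii show i unfolding i_def using \<open>ii\<close> EPi unfolding ii_eq by blast
  qed
  have i_iii: "i \<longleftrightarrow> iii"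
  proof
    assume i: i
    show iii unfolding iii_def
    proof
      fix mu :: "'x \<Rightarrow> 'l" assume "mu \<in> X \<rightarrow>\<^sub>E UNIV"
      obtain lam' where lam': "?F Y (?E Y mu) = ?F Y' lam'" using i EPi unfolding i_def by blast
      show "?F Y (?E Y mu) = ?F Y' (?E Y' mu)"
        by (rule sandwich[OF L sub]) (simp add: lam' fef[OF L])
    qed
  next
    assume iii: iii
    show i unfolding i_def
    proof
      fix lam :: "'y \<Rightarrow> 'l" assume "lam \<in> Y \<rightarrow>\<^sub>E UNIV"
      have "?F Y lam = ?F Y (?E Y (?F Y lam))" using fef[OF L] by metis
      also have "\<dots> = ?F Y' (?E Y' (?F Y lam))" using iii FPi unfolding iii_def by blast
      finally show "\<exists>lam'\<in>Y' \<rightarrow>\<^sub>E UNIV. ?F Y lam = ?F Y' lam'" using EPi by blast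
    qed
  qed
  have iii_iv: "iii \<longleftrightarrow> iv"
  proof
    assume iii: iii
    show iv unfolding iv_def ctx_K_def using iii unfolding iii_def by auto
  next
    assume iv: iv
    show iii unfolding iii_def
    proof
      fix mu :: "'x \<Rightarrow> 'l" assume "mu \<in> X \<rightarrow>\<^sub>E UNIV"
      have "?F Y (?E Y mu) \<in> ctx_K tm res phi X Y"
        unfolding ctx_K_def using FPi fef[OF L] by blast
      then have "?F Y (?E Y mu) \<in> ctx_K tm res phi X Y'" using iv unfolding iv_def by blast
      then show "?F Y (?E Y mu) = ?F Y' (?E Y' mu)"
        by (intro sandwich[OF L sub]) (simp add: ctx_K_def)
    qed
  qed
  show ?thesis using i_ii i_iii iii_iv by blast
qed

end
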